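(* For every symmetric instance with $n$ actions and $k$ signals ($2\le k\le n$) there exist a slope $s\in[-\infty,0]$ and an optimal scheme with $k$ signals that is direct, persuasive, recommends only actions in $[k]$, and whose recommendation points form an $s$-Pareto point collection $\mathcal P$ satisfying $u_{\mathcal S}(\mathcal P)\ge u_{\mathcal S}(\mathcal P')$ for every $s'\in[-\infty,0]$ and every $s'$-Pareto point collection $\mathcal P'$.
   Context: Model: a receiver chooses one of the actions $[n]$; each action $i$ has a type $\theta_i$; the state $\boldsymbol\theta=(\theta_1,\dots,\theta_n)$ is drawn from a commonly known distribution $q$ over a finite set of type vectors. Each type $t$ has receiver value $\rho(t)$ and sender value $\xi(t)$, received if the receiver takes an action of that type. A signaling scheme with $k$ signals maps each state to a distribution over $k$ signals; the sender commits to it, observes the state and sends a signal; the receiver picks an action maximizing her conditional expected utility given the signal, breaking ties in favor of the sender. $u_{\mathcal S},u_{\mathcal R}$ denote expected utilities; optimal means maximizing $u_{\mathcal S}$ among schemes with $k$ signals. Direct: each signal recommends an action; persuasive: for each signal sent with positive probability recommending $i$, $\mathbb E[\rho(\theta_i)\mid\sigma]\ge\mathbb E[\rho(\theta_j)\mid\sigma]$ for all $j$. $\rho_E=\max_{i\in[n]}\sum_{\boldsymbol\theta}q_{\boldsymbol\theta}\rho(\theta_i)$. Symmetric instance: $q_{\boldsymbol\theta}=q_{\boldsymbol\theta'}$ whenever $\boldsymbol\theta'$ is a permutation of $\boldsymbol\theta$; all actions share the type set $\Theta$, and (w.l.o.g.) the types in any state are pairwise distinct. Identify each type $c$ with the point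 $(\rho(c),\xi(c))\in\mathbb R^2$. For a $k$-element set $C$ of types let $q_C=\Pr[\{\theta_1,\dots,\theta_k\}=C]$. For $s\in(-\infty,0]$, a point $p$ of the convex hull $\mathrm{conv}(C)$ corresponds to slope $s$ if it maximizes $y-sx$ over $(x,y)\in\mathrm{conv}(C)$; it corresponds to slope $-\infty$ if it maximizes $x$ (first coordinate) over $\mathrm{conv}(C)$. The Pareto frontier of $C$ is the set of points of $\mathrm{conv}(C)$ corresponding to some slope in $[-\infty,0]$. A point collection $\mathcal P$ assigns to each $C$ with $q_C>0$ a point $p(C)=(p_{\mathcal R}(C),p_{\mathcal S}(C))\in\mathrm{conv}(C)$; $u_{\mathcal S}(\mathcal P)=\sum_C q_Cp_{\mathcal S}(C)$ and $u_{\mathcal R}(\mathcal P)=\sum_Cq_Cp_{\mathcal R}(C)$. For $s\in[-\infty,0]$, $\mathcal P$ is $s$-Pareto if (1) for every $C$, $p(C)$ corresponds to slope $s$ (in particular lies on the Pareto frontier of $C$), and (2) $u_{\mathcal R}(\mathcal P)\ge\rho_E$. For a direct scheme recommending only actions in $[k]$, its recommendation point for $C$ is $(\mathbb E[\rho(\theta_\sigma)\mid \{\theta_1,\dots,\theta_k\}=C],\ \mathbb E[\xi(\theta_\sigma)\mid\{\theta_1,\dots,\theta_k\}=C])$, where $\sigma$ is the recommended action; these points form a point collection. *)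

theory Defs
  imports "HOL-Analysis.Analysis" "HOL-Probability.Probability_Mass_Function"
begin

text \<open>Actions are 0,...,n-1 (so [k] = {0..<k}); a state is a list of n types
(type variable 'c); the prior q is a pmf on states. Signals are 0,...,k-1.
A scheme is phi :: 'c list => nat => real, phi theta sigma = probability of signal sigma
in state theta. Types are identified with points (rho c, xi c) in R^2.\<close>

definition symmetric_instance :: "'c list pmf \<Rightarrow> nat \<Rightarrow> bool" where
  "symmetric_instance q n \<longleftrightarrow>
     finite (set_pmf q) \<and>
     (\<forall>th\<in>set_pmf q. length th = n \<and> distinct th) \<and>
     (\<forall>th th'. mset th = mset th' \<longrightarrow> pmf q th = pmf q th')"

definition valid_scheme :: "'c list pmf \<Rightarrow> nat \<Rightarrow> ('c list \<Rightarrow> nat \<Rightarrow> real) \<Rightarrow> bool" where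
  "valid_scheme q k phi \<longleftrightarrow>
     (\<forall>th\<in>set_pmf q. (\<forall>sg<k. 0 \<le> phi th sg) \<and> (\<Sum>sg<k. phi th sg) = 1)"

definition sig_prob :: "'c list pmf \<Rightarrow> ('c list \<Rightarrow> nat \<Rightarrow> real) \<Rightarrow> nat \<Rightarrow> real" where
  "sig_prob q phi sg = (\<Sum>th\<in>set_pmf q. pmf q th * phi th sg)"

definition joint_val :: "'c list pmf \<Rightarrow> ('c \<Rightarrow> real) \<Rightarrow> ('c list \<Rightarrow> nat \<Rightarrow> real) \<Rightarrow> nat \<Rightarrow> nat \<Rightarrow> real" where
  "joint_val q f phi sg i = (\<Sum>th\<in>set_pmf q. pmf q th * phi th sg * f (th ! i))"

text \<open>Receiver best responses to signal sg (actions maximising conditional expected utility;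
for a zero-probability signal every action is a best response, which is irrelevant).\<close>
definition best_resp :: "'c list pmf \<Rightarrow> nat \<Rightarrow> ('c \<Rightarrow> real) \<Rightarrow> ('c list \<Rightarrow> nat \<Rightarrow> real) \<Rightarrow> nat \<Rightarrow> nat set" where
  "best_resp q n rho phi sg = {i. i < n \<and> (\<forall>j<n. joint_val q rho phi sg j \<le> joint_val q rho phi sg i)}"

text \<open>Sender utility, ties broken in favour of the sender.\<close>
definition sender_util :: "'c list pmf \<Rightarrow> nat \<Rightarrow> nat \<Rightarrow> ('c \<Rightarrow> real) \<Rightarrow> ('c \<Rightarrow> real) \<Rightarrow> ('c list \<Rightarrow> nat \<Rightarrow> real) \<Rightarrow> real" where
  "sender_util q n k rho xi phi =
     (\<Sum>sg<k. Max ((\<lambda>i. joint_val q xi phi sg i) ` best_resp q n rho phi sg))"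

definition optimal_scheme :: "'c list pmf \<Rightarrow> nat \<Rightarrow> nat \<Rightarrow> ('c \<Rightarrow> real) \<Rightarrow> ('c \<Rightarrow> real) \<Rightarrow> ('c list \<Rightarrow> nat \<Rightarrow> real) \<Rightarrow> bool" where
  "optimal_scheme q n k rho xi phi \<longleftrightarrow> valid_scheme q k phi \<and>
     (\<forall>psi. valid_scheme q k psi \<longrightarrow> sender_util q n k rho xi psi \<le> sender_util q n k rho xi phi)"

definition persuasive :: "'c list pmf \<Rightarrow> nat \<Rightarrow> nat \<Rightarrow> ('c \<Rightarrow> real) \<Rightarrow> ('c list \<Rightarrow> nat \<Rightarrow> real) \<Rightarrow> (nat \<Rightarrow> nat) \<Rightarrow> bool" where
  "persuasive q n k rho phi recm \<longleftrightarrow>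
     (\<forall>sg<k. recm sg < n \<and>
        (sig_prob q phi sg > 0 \<longrightarrow>
          (\<forall>j<n. joint_val q rho phi sg j / sig_prob q phi sg
                 \<le> joint_val q rho phi sg (recm sg) / sig_prob q phi sg)))"

definition rho_E :: "'c list pmf \<Rightarrow> nat \<Rightarrow> ('c \<Rightarrow> real) \<Rightarrow> real" where
  "rho_E q n rho = Max ((\<lambda>i. \<Sum>th\<in>set_pmf q. pmf q th * rho (th ! i)) ` {..<n})"

definition qC :: "'c list pmf \<Rightarrow> nat \<Rightarrow> 'c set \<Rightarrow> real" where
  "qC q k C = (\<Sum>th\<in>{th\<in>set_pmf q. set (take k th) = C}. pmf q th)"

definition pts :: "('c \<Rightarrow> real) \<Rightarrow> ('c \<Rightarrow> real) \<Rightarrow> 'c set \<Rightarrow> (real \<times> real) set" where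
  "pts rho xi C = (\<lambda>c. (rho c, xi c)) ` C"

text \<open>Slopes in [-infinity,0] are extended reals s <= 0.\<close>
definition corresponds_to_slope :: "ereal \<Rightarrow> (real \<times> real) set \<Rightarrow> real \<times> real \<Rightarrow> bool" where
  "corresponds_to_slope s A p \<longleftrightarrow> p \<in> convex hull A \<and>
     (if s = -\<infinity> then (\<forall>z\<in>convex hull A. fst z \<le> fst p)
      else (\<forall>z\<in>convex hull A. snd z - real_of_ereal s * fst z \<le> snd p - real_of_ereal s * fst p))"

text \<open>Point collections: functions P :: 'c set => real*real; only the values at sets C with
q_C > 0 matter.\<close>
definition uS_pc :: "'c list pmf \<Rightarrow> nat \<Rightarrow> ('c set \<Rightarrow> real \<times> real) \<Rightarrow> real" where
  "uS_pc q k P = (\<Sum>C\<in>{C. qC q k C > 0}. qC q k C * snd (P C))"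

definition uR_pc :: "'c list pmf \<Rightarrow> nat \<Rightarrow> ('c set \<Rightarrow> real \<times> real) \<Rightarrow> real" where
  "uR_pc q k P = (\<Sum>C\<in>{C. qC q k C > 0}. qC q k C * fst (P C))"

definition s_Pareto :: "'c list pmf \<Rightarrow> nat \<Rightarrow> nat \<Rightarrow> ('c \<Rightarrow> real) \<Rightarrow> ('c \<Rightarrow> real) \<Rightarrow> ereal \<Rightarrow> ('c set \<Rightarrow> real \<times> real) \<Rightarrow> bool" where
  "s_Pareto q n k rho xi s P \<longleftrightarrow>
     (\<forall>C. qC q k C > 0 \<longrightarrow> corresponds_to_slope s (pts rho xi C) (P C)) \<and>
     uR_pc q k P \<ge> rho_E q n rho"

definition rec_points :: "'c list pmf \<Rightarrow> nat \<Rightarrow> ('c \<Rightarrow> real) \<Rightarrow> ('c \<Rightarrow> real) \<Rightarrow> ('c list \<Rightarrow> nat \<Rightarrow> real) \<Rightarrow> (nat \<Rightarrow> nat) \<Rightarrow> 'c set \<Rightarrow> real \<times> real" where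
  "rec_points q k rho xi phi recm C =
     ((\<Sum>th\<in>{th\<in>set_pmf q. set (take k th) = C}. \<Sum>sg<k. pmf q th * phi th sg * rho (th ! recm sg)) / qC q k C,
      (\<Sum>th\<in>{th\<in>set_pmf q. set (take k th) = C}. \<Sum>sg<k. pmf q th * phi th sg * xi (th ! recm sg)) / qC q k C)"

end

theory Submission
  imports Defs
begin

lemma sumset_insert:
  fixes H :: "'i \<Rightarrow> 'a::real_vector set"
  assumes "finite I" "i \<notin> I"
  shows "{\<Sum>j\<in>insert i I. p j | p. \<forall>j\<in>insert i I. p j \<in> H j}
       = {x + y | x y. x \<in> H i \<and> y \<in> {\<Sum>j\<in>I. p j | p. \<forall>j\<in>I. p j \<in> H j}}"
proof safe
  fix p assume "\<forall>j\<in>insert i I. p j \<in> H j"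
  then show "\<exists>x y. (\<Sum>j\<in>insert i I. p j) = x + y \<and> x \<in> H i \<and> y \<in> {\<Sum>j\<in>I. p j | p. \<forall>j\<in>I. p j \<in> H j}"
    using assms by (intro exI[of _ "p i"] exI[of _ "\<Sum>j\<in>I. p j"]) auto
next
  fix x p assume x: "x \<in> H i" and p: "\<forall>j\<in>I. p j \<in> H j"
  have "(\<Sum>j\<in>I. (p(i:=x)) j) = (\<Sum>j\<in>I. p j)" using assms by (intro sum.cong) auto
  then have "(\<Sum>j\<in>insert i I. (p(i:=x)) j) = x + (\<Sum>j\<in>I. p j)" using assms by simp
  moreover have "\<forall>j\<in>insert i I. (p(i:=x)) j \<in> H j" using x p by auto
  ultimately show "\<exists>pa. x + sum p I = (\<Sum>j\<in>insert i I. pa j) \<and> (\<forall>j\<in>insert i I. pa j \<in> H j)"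
    by metis
qed

lemma sumset_compact:
  fixes H :: "'i \<Rightarrow> 'a::real_normed_vector set"
  assumes "finite I" "\<And>i. i \<in> I \<Longrightarrow> compact (H i)"
  shows "compact {\<Sum>j\<in>I. p j | p. \<forall>j\<in>I. p j \<in> H j}"
  using assms
proof (induction I rule: finite_induct)
  case empty
  then show ?case by simp
next
  case (insert i I)
  show ?case unfolding sumset_insert[OF insert(1,2)]
    by (rule compact_sums) (use insert in auto)
qed

lemma sumset_convex:
  fixes H :: "'i \<Rightarrow> 'a::real_vector set"
  assumes "\<And>i. i \<in> I \<Longrightarrow> convex (H i)"
  shows "convex {\<Sum>j\<in>I. p j | p. \<forall>j\<in>I. p j \<in> H j}"
  unfolding convex_def
proof safe
  fix p1 p2 :: "'i \<Rightarrow> 'a" and u v :: real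
  assume h: "\<forall>j\<in>I. p1 j \<in> H j" "\<forall>j\<in>I. p2 j \<in> H j" "0 \<le> u" "0 \<le> v" "u + v = 1"
  have "\<forall>j\<in>I. u *\<^sub>R p1 j + v *\<^sub>R p2 j \<in> H j"
    using h assms unfolding convex_def by blast
  moreover have "u *\<^sub>R (\<Sum>j\<in>I. p1 j) + v *\<^sub>R (\<Sum>j\<in>I. p2 j) = (\<Sum>j\<in>I. u *\<^sub>R p1 j + v *\<^sub>R p2 j)"
    by (simp add: scaleR_sum_right sum.distrib)
  ultimately show "\<exists>p. u *\<^sub>R sum p1 I + v *\<^sub>R sum p2 I = sum p I \<and> (\<forall>j\<in>I. p j \<in> H j)"
    by blast
qed

lemma hull_image_weights:
  fixes f :: "'c \<Rightarrow> 'a::real_vector"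
  assumes "finite C" "z \<in> convex hull (f ` C)"
  shows "\<exists>u. (\<forall>c\<in>C. 0 \<le> u c) \<and> sum u C = 1 \<and> (\<Sum>c\<in>C. u c *\<^sub>R f c) = z"
proof -
  let ?R = "{y. \<exists>u. (\<forall>c\<in>C. 0 \<le> u c) \<and> sum u C = 1 \<and> (\<Sum>c\<in>C. u c *\<^sub>R f c) = y}"
  have "f ` C \<subseteq> ?R"
  proof
    fix y assume "y \<in> f ` C"
    then obtain c where c: "c \<in> C" "y = f c" by auto
    let ?u = "\<lambda>x. if x = c then 1 else (0::real)"
    have "sum ?u C = 1" using c assms(1) by (simp add: sum.delta)
    moreover have "(\<Sum>x\<in>C. ?u x *\<^sub>R f x) = (\<Sum>x\<in>C. if x = c then f x else 0)"
      by (rule sum.cong) auto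
    moreover have "(\<Sum>x\<in>C. if x = c then f x else 0) = f c" using c assms(1)
      by (simp add: sum.delta)
    ultimately show "y \<in> ?R" using c by (intro CollectI exI[of _ ?u]) auto
  qed
  moreover have "convex ?R"
    unfolding convex_def
  proof safe
    fix u1 u2 :: "'c \<Rightarrow> real" and a b :: real
    assume h: "\<forall>c\<in>C. 0 \<le> u1 c" "sum u1 C = 1" "\<forall>c\<in>C. 0 \<le> u2 c" "sum u2 C = 1" "0 \<le> a" "0 \<le> b" "a + b = 1"
    let ?u = "\<lambda>c. a * u1 c + b * u2 c"
    have "sum ?u C = 1" using h by (simp add: sum.distrib sum_distrib_left[symmetric])
    moreover have "(\<Sum>c\<in>C. ?u c *\<^sub>R f c) = a *\<^sub>R (\<Sum>c\<in>C. u1 c *\<^sub>R f c) + b *\<^sub>R (\<Sum>c\<in>C. u2 c *\<^sub>R f c)"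
      by (simp add: scaleR_sum_right sum.distrib scaleR_add_left)
    moreover have "\<forall>c\<in>C. 0 \<le> ?u c" using h by auto
    ultimately show "\<exists>u. (\<forall>c\<in>C. 0 \<le> u c) \<and> sum u C = 1 \<and> (\<Sum>c\<in>C. u c *\<^sub>R f c) = a *\<^sub>R (\<Sum>c\<in>C. u1 c *\<^sub>R f c) + b *\<^sub>R (\<Sum>c\<in>C. u2 c *\<^sub>R f c)"
      by metis
  qed
  ultimately have "convex hull (f ` C) \<subseteq> ?R" by (rule hull_minimal)
  then show ?thesis using assms(2) by blast
qed



lemma wsumset_eq:
  fixes H :: "'i \<Rightarrow> 'a::real_vector set"
  shows "{\<Sum>j\<in>I. w j *\<^sub>R p j | p. \<forall>j\<in>I. p j \<in> H j}
       = {\<Sum>j\<in>I. p j | p. \<forall>j\<in>I. p j \<in> (\<lambda>z. w j *\<^sub>R z) ` H j}"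
proof safe
  fix p assume "\<forall>j\<in>I. p j \<in> H j"
  then show "\<exists>pa. (\<Sum>j\<in>I. w j *\<^sub>R p j) = sum pa I \<and> (\<forall>j\<in>I. pa j \<in> (\<lambda>z. w j *\<^sub>R z) ` H j)"
    by (intro exI[of _ "\<lambda>j. w j *\<^sub>R p j"]) auto
next
  fix p assume "\<forall>j\<in>I. p j \<in> (\<lambda>z. w j *\<^sub>R z) ` H j"
  then have "\<forall>j\<in>I. \<exists>z\<in>H j. p j = w j *\<^sub>R z" by auto
  then obtain g where g: "\<forall>j\<in>I. g j \<in> H j \<and> p j = w j *\<^sub>R g j" by metis
  then have "sum p I = (\<Sum>j\<in>I. w j *\<^sub>R g j)" by (intro sum.cong) auto
  with g show "\<exists>pa. sum p I = (\<Sum>j\<in>I. w j *\<^sub>R pa j) \<and> (\<forall>j\<in>I. pa j \<in> H j)" by blast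
qed

lemma lp_slope:
  fixes I :: "'i set" and w :: "'i \<Rightarrow> real" and V :: "'i \<Rightarrow> (real \<times> real) set" and r :: real
  assumes fin: "finite I" and finV: "\<And>i. i \<in> I \<Longrightarrow> finite (V i)"
    and feas: "\<exists>P. (\<forall>i\<in>I. P i \<in> convex hull (V i)) \<and> (\<Sum>i\<in>I. w i * fst (P i)) \<ge> r"
    and wpos: "\<And>i. i \<in> I \<Longrightarrow> w i > 0"
  shows "\<exists>(s::ereal) P. s \<le> 0 \<and> (\<forall>i\<in>I. corresponds_to_slope s (V i) (P i)) \<and>
           (\<Sum>i\<in>I. w i * fst (P i)) \<ge> r \<and>
           (\<forall>P'. (\<forall>i\<in>I. P' i \<in> convex hull (V i)) \<and> (\<Sum>i\<in>I. w i * fst (P' i)) \<ge> r \<longrightarrow>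
               (\<Sum>i\<in>I. w i * snd (P' i)) \<le> (\<Sum>i\<in>I. w i * snd (P i)))"
proof -
  define K where "K = {\<Sum>j\<in>I. w j *\<^sub>R p j | p. \<forall>j\<in>I. p j \<in> convex hull (V j)}"
  have fstK: "fst (\<Sum>j\<in>I. w j *\<^sub>R p j) = (\<Sum>j\<in>I. w j * fst (p j))" for p :: "'i \<Rightarrow> real \<times> real"
    by (simp add: fst_sum)
  have sndK: "snd (\<Sum>j\<in>I. w j *\<^sub>R p j) = (\<Sum>j\<in>I. w j * snd (p j))" for p :: "'i \<Rightarrow> real \<times> real"
    by (simp add: snd_sum)
  have cK: "compact K" unfolding K_def wsumset_eq
    by (rule sumset_compact[OF fin]) (auto intro!: compact_scaling finite_imp_compact_convex_hull finV)
  have vK: "convex K" unfolding K_def wsumset_eq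
    by (rule sumset_convex) (auto intro!: convex_scaling convex_convex_hull)
  define F where "F = K \<inter> {z. r \<le> fst z}"
  have cF: "compact F" unfolding F_def
    by (rule compact_Int_closed[OF cK]) (auto intro!: closed_Collect_le continuous_intros)
  have neF: "F \<noteq> {}"
  proof -
    from feas obtain P where P: "\<forall>i\<in>I. P i \<in> convex hull (V i)" "(\<Sum>i\<in>I. w i * fst (P i)) \<ge> r" by blast
    then have "(\<Sum>j\<in>I. w j *\<^sub>R P j) \<in> F" unfolding F_def K_def using fstK by auto
    then show ?thesis by blast
  qed
  obtain zs where zs: "zs \<in> F" "\<And>y. y \<in> F \<Longrightarrow> snd y \<le> snd zs"
  proof -
    have "continuous_on F snd" by (intro continuous_intros)
    from continuous_attains_sup[OF cF neF this] show ?thesis using that by blast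
  qed
  from zs(1) obtain Ps where Ps: "\<forall>j\<in>I. Ps j \<in> convex hull (V j)" "zs = (\<Sum>j\<in>I. w j *\<^sub>R Ps j)"
    unfolding F_def K_def by blast
  have xs: "r \<le> fst zs" using zs(1) unfolding F_def by auto
  define U where "U = {z::real\<times>real. r \<le> fst z \<and> snd zs < snd z}"
  have vU: "convex U" unfolding U_def convex_def
  proof safe
    fix x y :: "real \<times> real" and u v :: real
    assume h: "r \<le> fst x" "snd zs < snd x" "r \<le> fst y" "snd zs < snd y" "0 \<le> u" "0 \<le> v" "u + v = 1"
    have "u * r \<le> u * fst x" "v * r \<le> v * fst y" using h by (auto intro: mult_left_mono)
    then have "(u + v) * r \<le> u * fst x + v * fst y" by (simp add: distrib_right add_mono)
    then show "r \<le> fst (u *\<^sub>R x + v *\<^sub>R y)" using h(7) by simp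
    have "u * snd zs \<le> u * snd x" "v * snd zs \<le> v * snd y" using h by (auto intro: mult_left_mono)
    moreover have "u * snd zs < u * snd x \<or> v * snd zs < v * snd y"
      using h by (cases "u = 0") auto
    ultimately have "(u + v) * snd zs < u * snd x + v * snd y" by (auto simp: algebra_simps)
    then show "snd zs < snd (u *\<^sub>R x + v *\<^sub>R y)" using h(7) by simp
  qed
  have "(r, snd zs + 1) \<in> U" unfolding U_def by simp
  then have neU: "U \<noteq> {}" by blast
  have dis: "K \<inter> U = {}"
  proof (rule ccontr)
    assume "K \<inter> U \<noteq> {}"
    then obtain z where "z \<in> K" "z \<in> U" by blast
    then have "z \<in> F" "snd zs < snd z" unfolding F_def U_def by auto
    with zs(2) show False by fastforce
  qed
  have neK: "K \<noteq> {}" using neF unfolding F_def by blast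
  obtain a \<beta> where a: "a \<noteq> 0" "\<And>x. x \<in> K \<Longrightarrow> inner a x \<le> \<beta>" "\<And>x. x \<in> U \<Longrightarrow> inner a x \<ge> \<beta>"
    using separating_hyperplane_sets[OF vK vU neK neU dis] by blast
  obtain a1 a2 where a12: "a = (a1, a2)" by (cases a)
  have Lin: "inner a (x, y) = a1 * x + a2 * y" for x y using a12 by simp
  have a1: "a1 \<ge> 0"
  proof (rule ccontr)
    assume "\<not> a1 \<ge> 0"
    define c where "c = \<beta> - a1 * r - a2 * (snd zs + 1)"
    define t where "t = \<bar>c\<bar> / (- a1) + 1"
    have "t \<ge> 0" using \<open>\<not> a1 \<ge> 0\<close> unfolding t_def by auto
    then have "(r + t, snd zs + 1) \<in> U" unfolding U_def by auto
    then have "\<beta> \<le> a1 * (r + t) + a2 * (snd zs + 1)" using a(3) Lin by fastforce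
    moreover have "a1 * t = - \<bar>c\<bar> + a1" using \<open>\<not> a1 \<ge> 0\<close> unfolding t_def by (simp add: field_simps)
    ultimately show False using \<open>\<not> a1 \<ge> 0\<close> unfolding c_def by (auto simp: algebra_simps)
  qed
  have a2: "a2 \<ge> 0"
  proof (rule ccontr)
    assume "\<not> a2 \<ge> 0"
    define c where "c = \<beta> - a1 * r - a2 * (snd zs + 1)"
    define t where "t = \<bar>c\<bar> / (- a2) + 1"
    have "t \<ge> 0" using \<open>\<not> a2 \<ge> 0\<close> unfolding t_def by auto
    then have "(r, snd zs + 1 + t) \<in> U" unfolding U_def by auto
    then have "\<beta> \<le> a1 * r + a2 * (snd zs + 1 + t)" using a(3) Lin by fastforce
    moreover have "a2 * t = - \<bar>c\<bar> + a2" using \<open>\<not> a2 \<ge> 0\<close> unfolding t_def by (simp add: field_simps)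
    ultimately show False using \<open>\<not> a2 \<ge> 0\<close> unfolding c_def by (auto simp: algebra_simps)
  qed
  have bet: "\<beta> \<le> a1 * r + a2 * snd zs"
  proof (cases "a2 = 0")
    case True
    have "(r, snd zs + 1) \<in> U" unfolding U_def by auto
    then show ?thesis using a(3) Lin True by fastforce
  next
    case False
    show ?thesis
    proof (rule ccontr)
      assume nb: "\<not> \<beta> \<le> a1 * r + a2 * snd zs"
      define e where "e = (\<beta> - a1 * r - a2 * snd zs) / (2 * a2)"
      have "e > 0" using False a2 nb unfolding e_def by auto
      then have "(r, snd zs + e) \<in> U" unfolding U_def by auto
      then have "\<beta> \<le> a1 * r + a2 * (snd zs + e)" using a(3) Lin by fastforce
      moreover have "a2 * e = (\<beta> - a1 * r - a2 * snd zs) / 2" using False unfolding e_def by (simp add: field_simps)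
      ultimately show False using nb by (auto simp: algebra_simps)
    qed
  qed
  define L where "L z = a1 * fst z + a2 * snd z" for z :: "real \<times> real"
  have Lmax: "L z \<le> L zs" if "z \<in> K" for z
  proof -
    have "L z = inner a z" using Lin unfolding L_def by (cases z) auto
    also have "\<dots> \<le> \<beta>" using a(2) that by blast
    also have "\<dots> \<le> a1 * r + a2 * snd zs" by (rule bet)
    also have "\<dots> \<le> L zs" unfolding L_def using a1 xs by (auto intro: mult_left_mono)
    finally show ?thesis .
  qed
  have Lsum: "L (\<Sum>j\<in>I. w j *\<^sub>R p j) = (\<Sum>j\<in>I. w j * L (p j))" for p
    unfolding L_def by (simp add: fst_sum snd_sum sum_distrib_left sum.distrib algebra_simps)
  have Lloc: "L z \<le> L (Ps i)" if i: "i \<in> I" and z: "z \<in> convex hull (V i)" for i z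
  proof -
    define P' where "P' = Ps(i := z)"
    have "(\<Sum>j\<in>I. w j *\<^sub>R P' j) \<in> K" unfolding K_def P'_def using Ps(1) z by auto
    then have "L (\<Sum>j\<in>I. w j *\<^sub>R P' j) \<le> L zs" by (rule Lmax)
    moreover have "(\<Sum>j\<in>I. w j * L (P' j)) = (\<Sum>j\<in>I. w j * L (Ps j)) + w i * (L z - L (Ps i))"
    proof -
      have "(\<Sum>j\<in>I. w j * L (P' j)) = w i * L z + (\<Sum>j\<in>I-{i}. w j * L (Ps j))"
        using i fin unfolding P'_def by (simp add: sum.remove)
      moreover have "(\<Sum>j\<in>I. w j * L (Ps j)) = w i * L (Ps i) + (\<Sum>j\<in>I-{i}. w j * L (Ps j))"
        using i fin by (simp add: sum.remove)
      ultimately show ?thesis by (simp add: algebra_simps)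
    qed
    ultimately have "w i * (L z - L (Ps i)) \<le> 0" using Lsum Ps(2) by simp
    then show ?thesis using wpos[OF i] by (simp add: mult_le_0_iff)
  qed
  obtain s :: ereal where s: "s \<le> 0" "\<forall>i\<in>I. corresponds_to_slope s (V i) (Ps i)"
  proof (cases "a2 = 0")
    case True
    then have "a1 > 0" using a(1) a1 a12 by (auto simp: zero_prod_def)
    have "corresponds_to_slope (-\<infinity>) (V i) (Ps i)" if "i \<in> I" for i
      unfolding corresponds_to_slope_def using Ps(1) that Lloc[OF that] True \<open>a1 > 0\<close>
      by (auto simp: L_def)
    then show ?thesis using that[of "-\<infinity>"] by auto
  next
    case False
    then have "a2 > 0" using a2 by auto
    have "corresponds_to_slope (ereal (- a1 / a2)) (V i) (Ps i)" if "i \<in> I" for i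
      unfolding corresponds_to_slope_def
    proof (simp add: Ps(1) that, intro ballI)
      fix z assume "z \<in> convex hull (V i)"
      then have "L z \<le> L (Ps i)" using Lloc that by blast
      then have "L z / a2 \<le> L (Ps i) / a2" using \<open>a2 > 0\<close> by (simp add: divide_right_mono)
      then show "snd z + a1 * fst z / a2 \<le> snd (Ps i) + a1 * fst (Ps i) / a2"
        using \<open>a2 > 0\<close> unfolding L_def by (simp add: field_simps)
    qed
    moreover have "ereal (- a1 / a2) \<le> 0" using a1 \<open>a2 > 0\<close> by simp
    ultimately show ?thesis using that by blast
  qed
  show ?thesis
  proof (intro exI conjI allI impI)
    show "s \<le> 0" "\<forall>i\<in>I. corresponds_to_slope s (V i) (Ps i)" by (fact s)+
    show "(\<Sum>i\<in>I. w i * fst (Ps i)) \<ge> r" using xs Ps(2) fstK by simp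
    fix P' assume P': "(\<forall>i\<in>I. P' i \<in> convex hull (V i)) \<and> (\<Sum>i\<in>I. w i * fst (P' i)) \<ge> r"
    then have "(\<Sum>j\<in>I. w j *\<^sub>R P' j) \<in> F" unfolding F_def K_def using fstK by auto
    then have "snd (\<Sum>j\<in>I. w j *\<^sub>R P' j) \<le> snd zs" by (rule zs(2))
    then show "(\<Sum>i\<in>I. w i * snd (P' i)) \<le> (\<Sum>i\<in>I. w i * snd (Ps i))" using Ps(2) sndK by simp
  qed
qed



definition sw :: "nat \<Rightarrow> nat \<Rightarrow> 'a list \<Rightarrow> 'a list" where
  "sw a b th = th[a := th ! b, b := th ! a]"

definition tr :: "nat \<Rightarrow> nat \<Rightarrow> nat \<Rightarrow> nat" where
  "tr a b i = (if i = a then b else if i = b then a else i)"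

definition permL :: "nat \<Rightarrow> (nat \<Rightarrow> nat) \<Rightarrow> 'a list \<Rightarrow> 'a list" where
  "permL n \<sigma> th = map (\<lambda>i. th ! \<sigma> i) [0..<n]"

lemma sw_len[simp]: "length (sw a b th) = length th"
  by (simp add: sw_def)

lemma sw_nth: "a < length th \<Longrightarrow> b < length th \<Longrightarrow> i < length th \<Longrightarrow> sw a b th ! i = th ! tr a b i"
  by (auto simp: sw_def tr_def nth_list_update)

lemma sw_mset: "a < length th \<Longrightarrow> b < length th \<Longrightarrow> mset (sw a b th) = mset th"
  unfolding sw_def by (rule mset_swap)

lemma sw_sw: "a < length th \<Longrightarrow> b < length th \<Longrightarrow> sw a b (sw a b th) = th"
  by (rule nth_equalityI) (auto simp: sw_nth tr_def)

lemma tr_lt: "a < k \<Longrightarrow> b < k \<Longrightarrow> i < k \<Longrightarrow> tr a b i < k"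
  by (auto simp: tr_def)

lemma sw_take: "a < k \<Longrightarrow> b < k \<Longrightarrow> k \<le> length th \<Longrightarrow> set (take k (sw a b th)) = set (take k th)"
proof -
  assume h: "a < k" "b < k" "k \<le> length th"
  have "take k (sw a b th) = sw a b (take k th)"
    using h by (simp add: sw_def take_update_swap)
  then have "mset (take k (sw a b th)) = mset (take k th)"
    using h by (simp add: sw_mset)
  then have "set_mset (mset (take k (sw a b th))) = set_mset (mset (take k th))" by simp
  then show ?thesis by simp
qed

lemma permL_len[simp]: "length (permL n \<sigma> th) = n" by (simp add: permL_def)

lemma permL_nth: "i < n \<Longrightarrow> permL n \<sigma> th ! i = th ! \<sigma> i" by (simp add: permL_def)

lemma permL_mset:
  assumes "bij_betw \<sigma> {0..<n} {0..<n}" "length th = n"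
  shows "mset (permL n \<sigma> th) = mset th"
proof -
  have "mset (permL n \<sigma> th) = image_mset (nth th) (image_mset \<sigma> (mset [0..<n]))"
    by (simp add: permL_def multiset.map_comp o_def)
  also have "image_mset \<sigma> (mset [0..<n]) = mset_set {0..<n}"
    using assms(1) by (simp add: mset_upt image_mset_mset_set bij_betw_def)
  also have "image_mset (nth th) (mset_set {0..<n}) = mset (map (nth th) [0..<n])"
    by (simp add: mset_upt)
  also have "\<dots> = mset th" using map_nth[of th] assms(2) by simp
  finally show ?thesis .
qed

lemma permL_inj:
  assumes "bij_betw \<sigma> {0..<n} {0..<n}"
  shows "inj_on (permL n \<sigma>) {th. length th = n}"
proof (rule inj_onI)
  fix x y :: "'a list" assume h: "x \<in> {th. length th = n}" "y \<in> {th. length th = n}" "permL n \<sigma> x = permL n \<sigma> y"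
  show "x = y"
  proof (rule nth_equalityI)
    show "length x = length y" using h by simp
    fix j assume "j < length x"
    then have "j \<in> \<sigma> ` {0..<n}" using h assms by (simp add: bij_betw_def)
    then obtain i where i: "i < n" "j = \<sigma> i" by auto
    have "permL n \<sigma> x ! i = permL n \<sigma> y ! i" using h by simp
    then show "x ! j = y ! j" using i by (simp add: permL_nth)
  qed
qed

lemma ex_sigma_gen:
  fixes n k :: nat
  assumes "A \<subseteq> {0..<n}" "card A \<le> k" "k \<le> n"
  shows "\<exists>\<sigma>. bij_betw \<sigma> {0..<n} {0..<n} \<and> (\<forall>x\<in>A. \<sigma> x < k)"
proof -
  have finA: "finite A" using assms(1) finite_subset by blast
  define B where "B = {0..<card A}"
  have cB: "card B = card A" "finite B" unfolding B_def by simp_all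
  obtain f where f: "bij_betw f A B" using finite_same_card_bij[OF finA cB(2) cB(1)[symmetric]] by blast
  have BU: "B \<subseteq> {0..<n}" using assms unfolding B_def by auto
  have c1: "card ({0..<n} - A) = n - card A" using card_Diff_subset[OF finA assms(1)] by simp
  have c2: "card ({0..<n} - B) = n - card A" using card_Diff_subset[OF cB(2) BU] cB(1) by simp
  obtain g where g: "bij_betw g ({0..<n} - A) ({0..<n} - B)"
    using finite_same_card_bij[of "{0..<n} - A" "{0..<n} - B"] c1 c2 by auto
  define \<sigma> where "\<sigma> x = (if x \<in> A then f x else g x)" for x
  have "bij_betw \<sigma> A B" using f unfolding bij_betw_def inj_on_def \<sigma>_def by auto
  moreover have "bij_betw \<sigma> ({0..<n} - A) ({0..<n} - B)" using g
    unfolding bij_betw_def inj_on_def \<sigma>_def by auto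
  ultimately have "bij_betw \<sigma> (A \<union> ({0..<n} - A)) (B \<union> ({0..<n} - B))"
    by (rule bij_betw_combine) auto
  moreover have "A \<union> ({0..<n} - A) = {0..<n}" "B \<union> ({0..<n} - B) = {0..<n}" using assms(1) BU by auto
  ultimately have "bij_betw \<sigma> {0..<n} {0..<n}" by simp
  moreover have "\<forall>x\<in>A. \<sigma> x < k"
  proof
    fix x assume x: "x \<in> A"
    have "f x \<in> B" using f x unfolding bij_betw_def by blast
    then show "\<sigma> x < k" using x assms(2) unfolding \<sigma>_def B_def by auto
  qed
  ultimately show ?thesis by blast
qed

locale inst =
  fixes q :: "'c list pmf" and n k :: nat and rho xi :: "'c \<Rightarrow> real"
  assumes sym: "symmetric_instance q n" and k2: "2 \<le> k" and kn: "k \<le> n"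
begin

definition grp :: "'c set \<Rightarrow> 'c list set" where
  "grp C = {th \<in> set_pmf q. set (take k th) = C}"

definition TT :: "'c set set" where
  "TT = {C. qC q k C > 0}"

lemma finS: "finite (set_pmf q)" using sym by (simp add: symmetric_instance_def)
lemma lenS: "th \<in> set_pmf q \<Longrightarrow> length th = n" using sym by (simp add: symmetric_instance_def)
lemma distS: "th \<in> set_pmf q \<Longrightarrow> distinct th" using sym by (simp add: symmetric_instance_def)
lemma posS: "th \<in> set_pmf q \<Longrightarrow> pmf q th > 0"
  by (simp add: pmf_positive)
lemma pmf_mset: "mset th = mset th' \<Longrightarrow> pmf q th = pmf q th'"
  using sym unfolding symmetric_instance_def by blast
lemma inS_mset: "th \<in> set_pmf q \<Longrightarrow> mset th' = mset th \<Longrightarrow> th' \<in> set_pmf q"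
proof -
  assume h: "th \<in> set_pmf q" "mset th' = mset th"
  have "pmf q th' = pmf q th" using pmf_mset[OF h(2)] .
  then show ?thesis using h(1) by (simp add: set_pmf_iff)
qed

lemma qC_eq: "qC q k C = sum (pmf q) (grp C)"
  by (simp add: qC_def grp_def)

lemma finG: "finite (grp C)" using finS by (simp add: grp_def)

lemma TT_eq: "TT = (\<lambda>th. set (take k th)) ` set_pmf q"
proof safe
  fix C assume "C \<in> TT"
  then have "sum (pmf q) (grp C) > 0" by (simp add: TT_def qC_eq)
  then have "grp C \<noteq> {}" by auto
  then show "C \<in> (\<lambda>th. set (take k th)) ` set_pmf q" by (auto simp: grp_def)
next
  fix th assume th: "th \<in> set_pmf q"
  have "th \<in> grp (set (take k th))" using th by (simp add: grp_def)
  then have "pmf q th \<le> sum (pmf q) (grp (set (take k th)))"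
    using finG by (intro member_le_sum) auto
  then show "set (take k th) \<in> TT" using posS[OF th] by (simp add: TT_def qC_eq)
qed

lemma finTT: "finite TT" using finS by (simp add: TT_eq)

lemma qpos: "C \<in> TT \<Longrightarrow> qC q k C > 0" by (simp add: TT_def)

lemma group_sum: "(\<Sum>C\<in>TT. \<Sum>th\<in>grp C. g th) = (\<Sum>th\<in>set_pmf q. g th)"
proof -
  have "(\<lambda>th. set (take k th)) ` set_pmf q \<subseteq> TT" by (simp add: TT_eq)
  from sum.group[OF finS finTT this, of g] show ?thesis unfolding grp_def by simp
qed

lemma inTT: "th \<in> set_pmf q \<Longrightarrow> set (take k th) \<in> TT" by (simp add: TT_eq)

lemma finC: "C \<in> TT \<Longrightarrow> finite C" by (auto simp: TT_eq)

lemma nth_inC: "th \<in> set_pmf q \<Longrightarrow> i < k \<Longrightarrow> th ! i \<in> set (take k th)"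
proof -
  assume h: "th \<in> set_pmf q" "i < k"
  have "i < length (take k th)" using lenS[OF h(1)] kn h(2) by simp
  then have "take k th ! i \<in> set (take k th)" by (rule nth_mem)
  then show ?thesis using h(2) by simp
qed

lemma enum_sum:
  assumes "th \<in> set_pmf q"
  shows "(\<Sum>i<k. h (th ! i)) = (\<Sum>c\<in>set (take k th). h c)"
proof -
  have len: "k \<le> length th" using lenS[OF assms] kn by simp
  have inj: "inj_on (nth th) {..<k}" using distS[OF assms] len
    by (simp add: inj_on_def nth_eq_iff_index_eq)
  have img: "nth th ` {..<k} = set (take k th)" using nth_image[OF len] by (simp add: lessThan_atLeast0)
  show ?thesis using sum.reindex[OF inj, of h] img by simp
qed

lemma sw_inS: "th \<in> set_pmf q \<Longrightarrow> a < n \<Longrightarrow> b < n \<Longrightarrow> sw a b th \<in> set_pmf q"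
proof -
  assume h: "th \<in> set_pmf q" "a < n" "b < n"
  have "mset (sw a b th) = mset th" by (rule sw_mset) (use h lenS[OF h(1)] in auto)
  then show ?thesis using inS_mset[OF h(1)] by blast
qed

lemma sum_sw:
  assumes "a < n" "b < n"
  shows "(\<Sum>th\<in>set_pmf q. pmf q th * g th) = (\<Sum>th\<in>set_pmf q. pmf q th * g (sw a b th))"
proof -
  have bij: "bij_betw (sw a b) (set_pmf q) (set_pmf q)"
  proof (rule bij_betw_byWitness[where f' = "sw a b"])
    show "\<forall>x\<in>set_pmf q. sw a b (sw a b x) = x"
    proof
      fix x assume x: "x \<in> set_pmf q"
      show "sw a b (sw a b x) = x" by (rule sw_sw) (use assms lenS[OF x] in auto)
    qed
    then show "\<forall>x\<in>set_pmf q. sw a b (sw a b x) = x" .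
    show "sw a b ` set_pmf q \<subseteq> set_pmf q" using sw_inS assms by auto
    show "sw a b ` set_pmf q \<subseteq> set_pmf q" using sw_inS assms by auto
  qed
  have "(\<Sum>th\<in>set_pmf q. pmf q th * g th) = (\<Sum>th\<in>set_pmf q. pmf q (sw a b th) * g (sw a b th))"
    using sum.reindex_bij_betw[OF bij, of "\<lambda>th. pmf q th * g th"] by simp
  also have "\<dots> = (\<Sum>th\<in>set_pmf q. pmf q th * g (sw a b th))"
  proof (intro sum.cong refl)
    fix th assume th: "th \<in> set_pmf q"
    have m: "mset (sw a b th) = mset th" by (rule sw_mset) (use assms lenS[OF th] in auto)
    show "pmf q (sw a b th) * g (sw a b th) = pmf q th * g (sw a b th)"
      using pmf_mset[OF m] by simp
  qed
  finally show ?thesis .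
qed

lemma sum_perm:
  assumes \<sigma>: "bij_betw \<sigma> {0..<n} {0..<n}"
  shows "(\<Sum>th\<in>set_pmf q. pmf q th * g (permL n \<sigma> th)) = (\<Sum>th\<in>set_pmf q. pmf q th * g th)"
proof -
  have sub: "permL n \<sigma> ` set_pmf q \<subseteq> set_pmf q"
  proof
    fix x assume "x \<in> permL n \<sigma> ` set_pmf q"
    then obtain th where th: "th \<in> set_pmf q" "x = permL n \<sigma> th" by auto
    show "x \<in> set_pmf q" using inS_mset[OF th(1) permL_mset[OF \<sigma> lenS[OF th(1)]]] th(2) by simp
  qed
  have inj: "inj_on (permL n \<sigma>) (set_pmf q)"
  proof (rule inj_on_subset[OF permL_inj[OF \<sigma>]])
    show "set_pmf q \<subseteq> {th. length th = n}" using lenS by auto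
  qed
  have bij: "bij_betw (permL n \<sigma>) (set_pmf q) (set_pmf q)"
    unfolding bij_betw_def by (intro conjI inj endo_inj_surj[OF finS sub inj])
  have "(\<Sum>th\<in>set_pmf q. pmf q th * g (permL n \<sigma> th)) = (\<Sum>th\<in>set_pmf q. pmf q (permL n \<sigma> th) * g (permL n \<sigma> th))"
  proof (intro sum.cong refl)
    fix th assume th: "th \<in> set_pmf q"
    show "pmf q th * g (permL n \<sigma> th) = pmf q (permL n \<sigma> th) * g (permL n \<sigma> th)"
      using pmf_mset[OF permL_mset[OF \<sigma> lenS[OF th]]] by simp
  qed
  also have "\<dots> = (\<Sum>th\<in>set_pmf q. pmf q th * g th)"
    using sum.reindex_bij_betw[OF bij, of "\<lambda>th. pmf q th * g th"] by simp
  finally show ?thesis .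
qed

end


context inst begin

lemma permL_inS: "bij_betw \<sigma> {0..<n} {0..<n} \<Longrightarrow> th \<in> set_pmf q \<Longrightarrow> permL n \<sigma> th \<in> set_pmf q"
  using inS_mset permL_mset lenS by blast

lemma jv_sum:
  assumes "valid_scheme q k psi"
  shows "(\<Sum>sg<k. joint_val q f psi sg j) = (\<Sum>th\<in>set_pmf q. pmf q th * f (th ! j))"
proof -
  have "(\<Sum>sg<k. joint_val q f psi sg j) = (\<Sum>th\<in>set_pmf q. \<Sum>sg<k. pmf q th * psi th sg * f (th ! j))"
    unfolding joint_val_def by (rule sum.swap)
  also have "\<dots> = (\<Sum>th\<in>set_pmf q. pmf q th * f (th ! j) * (\<Sum>sg<k. psi th sg))"
    by (simp add: sum_distrib_left algebra_simps)
  also have "\<dots> = (\<Sum>th\<in>set_pmf q. pmf q th * f (th ! j))"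
    using assms unfolding valid_scheme_def by (intro sum.cong) auto
  finally show ?thesis .
qed

lemma best_resp_ne: "best_resp q n rho psi sg \<noteq> {}"
proof -
  let ?f = "\<lambda>i. joint_val q rho psi sg i"
  have ne: "?f ` {..<n} \<noteq> {}" using k2 kn by (simp add: lessThan_empty_iff)
  have "Max (?f ` {..<n}) \<in> ?f ` {..<n}" by (rule Max_in) (use ne in auto)
  then obtain i where i: "i < n" "?f i = Max (?f ` {..<n})" by auto
  have "\<forall>j<n. ?f j \<le> ?f i" using i by (auto intro: Max_ge)
  then have "i \<in> best_resp q n rho psi sg" using i unfolding best_resp_def by auto
  then show ?thesis by blast
qed

lemma best_resp_fin: "finite (best_resp q n rho psi sg)"
  by (rule finite_subset[of _ "{..<n}"]) (auto simp: best_resp_def)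

lemma rhoE_attained: "\<exists>j<n. rho_E q n rho = (\<Sum>th\<in>set_pmf q. pmf q th * rho (th ! j))"
proof -
  let ?f = "\<lambda>i. \<Sum>th\<in>set_pmf q. pmf q th * rho (th ! i)"
  have ne: "?f ` {..<n} \<noteq> {}" using k2 kn by (simp add: lessThan_empty_iff)
  have "Max (?f ` {..<n}) \<in> ?f ` {..<n}" by (rule Max_in) (use ne in auto)
  then show ?thesis unfolding rho_E_def by auto
qed

lemma rhoE_ge: "j < n \<Longrightarrow> (\<Sum>th\<in>set_pmf q. pmf q th * rho (th ! j)) \<le> rho_E q n rho"
  unfolding rho_E_def by (rule Max_ge) auto

lemma stepA:
  assumes psi: "valid_scheme q k psi"
  shows "\<exists>P. (\<forall>C\<in>TT. P C \<in> convex hull pts rho xi C) \<and>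
             rho_E q n rho \<le> (\<Sum>C\<in>TT. qC q k C * fst (P C)) \<and>
             sender_util q n k rho xi psi \<le> (\<Sum>C\<in>TT. qC q k C * snd (P C))"
proof -
  have "\<forall>sg. \<exists>i. i \<in> best_resp q n rho psi sg \<and>
          joint_val q xi psi sg i = Max ((\<lambda>i. joint_val q xi psi sg i) ` best_resp q n rho psi sg)"
  proof
    fix sg
    have "Max ((\<lambda>i. joint_val q xi psi sg i) ` best_resp q n rho psi sg) \<in> (\<lambda>i. joint_val q xi psi sg i) ` best_resp q n rho psi sg"
      by (rule Max_in) (use best_resp_fin best_resp_ne in auto)
    then show "\<exists>i. i \<in> best_resp q n rho psi sg \<and>
          joint_val q xi psi sg i = Max ((\<lambda>i. joint_val q xi psi sg i) ` best_resp q n rho psi sg)" by force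
  qed
  then obtain a where a: "\<And>sg. a sg \<in> best_resp q n rho psi sg"
    "\<And>sg. joint_val q xi psi sg (a sg) = Max ((\<lambda>i. joint_val q xi psi sg i) ` best_resp q n rho psi sg)"
    by metis
  have an: "a sg < n" for sg using a(1)[of sg] unfolding best_resp_def by auto
  have "a ` {..<k} \<subseteq> {0..<n}" using an by auto
  moreover have "card (a ` {..<k}) \<le> k" using card_image_le[of "{..<k}" a] by simp
  ultimately obtain \<sigma> where \<sigma>: "bij_betw \<sigma> {0..<n} {0..<n}" "\<forall>x\<in>a ` {..<k}. \<sigma> x < k"
    using ex_sigma_gen kn by blast
  define idx where "idx sg = \<sigma> (a sg)" for sg
  have idxk: "sg < k \<Longrightarrow> idx sg < k" for sg using \<sigma>(2) unfolding idx_def by auto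
  define psi' where "psi' th sg = psi (permL n \<sigma> th) sg" for th sg
  have psi'0: "th \<in> set_pmf q \<Longrightarrow> sg < k \<Longrightarrow> 0 \<le> psi' th sg" for th sg
    using psi permL_inS[OF \<sigma>(1)] unfolding valid_scheme_def psi'_def by blast
  have psi'1: "th \<in> set_pmf q \<Longrightarrow> (\<Sum>sg<k. psi' th sg) = 1" for th
    using psi permL_inS[OF \<sigma>(1)] unfolding valid_scheme_def psi'_def by blast
  define pt where "pt c = (rho c, xi c)" for c
  define P where "P C = (1 / qC q k C) *\<^sub>R (\<Sum>th\<in>grp C. \<Sum>sg<k. (pmf q th * psi' th sg) *\<^sub>R pt (th ! idx sg))" for C
  have hull: "P C \<in> convex hull pts rho xi C" if C: "C \<in> TT" for C
  proof -
    have qp: "qC q k C > 0" using qpos[OF C] .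
    define w where "w i = pmf q (fst i) * psi' (fst i) (snd i) / qC q k C" for i :: "'c list \<times> nat"
    define yv where "yv i = pt (fst i ! idx (snd i))" for i :: "'c list \<times> nat"
    have "P C = (\<Sum>th\<in>grp C. \<Sum>sg<k. w (th, sg) *\<^sub>R yv (th, sg))"
      unfolding P_def scaleR_sum_right w_def yv_def by (simp add: divide_inverse mult.commute)
    also have "\<dots> = (\<Sum>i\<in>grp C \<times> {..<k}. w i *\<^sub>R yv i)"
      by (subst sum.cartesian_product) (simp add: split_def)
    also have "\<dots> \<in> convex hull pts rho xi C"
    proof (rule convex_sum)
      show "finite (grp C \<times> {..<k})" using finG by simp
      show "convex (convex hull pts rho xi C)" by simp
      have "(\<Sum>i\<in>grp C \<times> {..<k}. w i) = (\<Sum>th\<in>grp C. \<Sum>sg<k. w (th, sg))"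
        by (subst sum.cartesian_product) (simp add: split_def)
      also have "\<dots> = (\<Sum>th\<in>grp C. pmf q th * (\<Sum>sg<k. psi' th sg) / qC q k C)"
        unfolding w_def by (simp add: sum_distrib_left sum_divide_distrib)
      also have "\<dots> = (\<Sum>th\<in>grp C. pmf q th / qC q k C)"
        using psi'1 by (intro sum.cong) (auto simp: grp_def)
      also have "\<dots> = 1" using qp by (simp add: sum_divide_distrib[symmetric] qC_eq)
      finally show "(\<Sum>i\<in>grp C \<times> {..<k}. w i) = 1" .
      show "\<And>i. i \<in> grp C \<times> {..<k} \<Longrightarrow> 0 \<le> w i"
        using psi'0 qp by (auto simp: grp_def w_def)
      show "yv i \<in> convex hull pts rho xi C" if i: "i \<in> grp C \<times> {..<k}" for i
      proof -
        obtain th sg where thsg: "i = (th, sg)" by (cases i)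
        have "th \<in> grp C" "sg \<in> {..<k}" using i thsg by auto
        then have "th \<in> set_pmf q" "set (take k th) = C" "idx sg < k" using idxk by (auto simp: grp_def)
        then have "th ! idx sg \<in> C" using nth_inC by blast
        then have "yv (th, sg) \<in> pts rho xi C" unfolding pts_def pt_def yv_def by auto
        then show "yv i \<in> convex hull pts rho xi C" unfolding thsg by (rule hull_inc)
      qed
    qed
    finally show ?thesis .
  qed
  have key: "(\<Sum>C\<in>TT. qC q k C * (1 / qC q k C) * (\<Sum>th\<in>grp C. \<Sum>sg<k. pmf q th * psi' th sg * f (th ! idx sg)))
           = (\<Sum>sg<k. joint_val q f psi sg (a sg))" for f
  proof -
    have "(\<Sum>C\<in>TT. qC q k C * (1 / qC q k C) * (\<Sum>th\<in>grp C. \<Sum>sg<k. pmf q th * psi' th sg * f (th ! idx sg)))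
        = (\<Sum>C\<in>TT. (\<Sum>th\<in>grp C. \<Sum>sg<k. pmf q th * psi' th sg * f (th ! idx sg)))"
      using qpos by (intro sum.cong) fastforce+
    also have "\<dots> = (\<Sum>th\<in>set_pmf q. \<Sum>sg<k. pmf q th * psi' th sg * f (th ! idx sg))"
      by (rule group_sum)
    also have "\<dots> = (\<Sum>sg<k. \<Sum>th\<in>set_pmf q. pmf q th * (psi (permL n \<sigma> th) sg * f (permL n \<sigma> th ! a sg)))"
      by (subst sum.swap) (auto simp: psi'_def idx_def permL_nth an mult.assoc intro!: sum.cong)
    also have "\<dots> = (\<Sum>sg<k. \<Sum>th\<in>set_pmf q. pmf q th * (psi th sg * f (th ! a sg)))"
      by (intro sum.cong refl sum_perm[OF \<sigma>(1)])
    also have "\<dots> = (\<Sum>sg<k. joint_val q f psi sg (a sg))"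
      unfolding joint_val_def by (simp add: mult.assoc)
    finally show ?thesis .
  qed
  have fstP: "qC q k C * fst (P C) = qC q k C * (1 / qC q k C) * (\<Sum>th\<in>grp C. \<Sum>sg<k. pmf q th * psi' th sg * rho (th ! idx sg))" for C
    unfolding P_def by (simp add: fst_sum pt_def)
  have sndP: "qC q k C * snd (P C) = qC q k C * (1 / qC q k C) * (\<Sum>th\<in>grp C. \<Sum>sg<k. pmf q th * psi' th sg * xi (th ! idx sg))" for C
    unfolding P_def by (simp add: snd_sum pt_def)
  have uR: "(\<Sum>C\<in>TT. qC q k C * fst (P C)) = (\<Sum>sg<k. joint_val q rho psi sg (a sg))"
    unfolding fstP by (rule key)
  have uS: "(\<Sum>C\<in>TT. qC q k C * snd (P C)) = (\<Sum>sg<k. joint_val q xi psi sg (a sg))"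
    unfolding sndP by (rule key)
  obtain j where j: "j < n" "rho_E q n rho = (\<Sum>th\<in>set_pmf q. pmf q th * rho (th ! j))"
    using rhoE_attained by blast
  have "rho_E q n rho = (\<Sum>sg<k. joint_val q rho psi sg j)" using j(2) jv_sum[OF psi] by simp
  also have "\<dots> \<le> (\<Sum>sg<k. joint_val q rho psi sg (a sg))"
    using a(1) j(1) unfolding best_resp_def by (intro sum_mono) auto
  finally have R: "rho_E q n rho \<le> (\<Sum>C\<in>TT. qC q k C * fst (P C))" using uR by simp
  have S: "sender_util q n k rho xi psi = (\<Sum>C\<in>TT. qC q k C * snd (P C))"
    unfolding uS sender_util_def using a(2) by simp
  show ?thesis using hull R S by (intro exI[of _ P]) auto
qed

end


context inst begin

lemma rec_sum:
  "(\<Sum>C\<in>TT. qC q k C * fst (rec_points q k rho xi phi recm C)) = (\<Sum>sg<k. joint_val q rho phi sg (recm sg))"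
  "(\<Sum>C\<in>TT. qC q k C * snd (rec_points q k rho xi phi recm C)) = (\<Sum>sg<k. joint_val q xi phi sg (recm sg))"
proof -
  have gen: "(\<Sum>C\<in>TT. qC q k C * ((\<Sum>th\<in>grp C. \<Sum>sg<k. pmf q th * phi th sg * f (th ! recm sg)) / qC q k C))
     = (\<Sum>sg<k. joint_val q f phi sg (recm sg))" for f
  proof -
    have "(\<Sum>C\<in>TT. qC q k C * ((\<Sum>th\<in>grp C. \<Sum>sg<k. pmf q th * phi th sg * f (th ! recm sg)) / qC q k C))
        = (\<Sum>C\<in>TT. (\<Sum>th\<in>grp C. \<Sum>sg<k. pmf q th * phi th sg * f (th ! recm sg)))"
      using qpos by (intro sum.cong) fastforce+
    also have "\<dots> = (\<Sum>th\<in>set_pmf q. \<Sum>sg<k. pmf q th * phi th sg * f (th ! recm sg))"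
      by (rule group_sum)
    also have "\<dots> = (\<Sum>sg<k. joint_val q f phi sg (recm sg))"
      unfolding joint_val_def by (rule sum.swap)
    finally show ?thesis .
  qed
  show "(\<Sum>C\<in>TT. qC q k C * fst (rec_points q k rho xi phi recm C)) = (\<Sum>sg<k. joint_val q rho phi sg (recm sg))"
    using gen[of rho] unfolding rec_points_def grp_def by simp
  show "(\<Sum>C\<in>TT. qC q k C * snd (rec_points q k rho xi phi recm C)) = (\<Sum>sg<k. joint_val q xi phi sg (recm sg))"
    using gen[of xi] unfolding rec_points_def grp_def by simp
qed

lemma stepC:
  assumes P: "\<forall>C\<in>TT. P C \<in> convex hull pts rho xi C"
    and R: "rho_E q n rho \<le> (\<Sum>C\<in>TT. qC q k C * fst (P C))"
  shows "\<exists>phi. valid_scheme q k phi \<and> (\<forall>C\<in>TT. rec_points q k rho xi phi id C = P C) \<and>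
           (\<forall>i<k. \<forall>j<n. joint_val q rho phi i j \<le> joint_val q rho phi i i)"
proof -
  define lam where "lam C = (SOME u. (\<forall>c\<in>C. 0 \<le> u c) \<and> sum u C = 1 \<and> (\<Sum>c\<in>C. u c *\<^sub>R (rho c, xi c)) = P C)" for C
  have lamP: "(\<forall>c\<in>C. 0 \<le> lam C c) \<and> sum (lam C) C = 1 \<and> (\<Sum>c\<in>C. lam C c *\<^sub>R (rho c, xi c)) = P C"
    if C: "C \<in> TT" for C
  proof -
    have "P C \<in> convex hull ((\<lambda>c. (rho c, xi c)) ` C)" using P C unfolding pts_def by blast
    from hull_image_weights[OF finC[OF C] this] show ?thesis unfolding lam_def by (rule someI_ex)
  qed
  define phi where "phi th sg = (if sg < k then lam (set (take k th)) (th ! sg) else 0)" for th sg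
  have valid: "valid_scheme q k phi"
    unfolding valid_scheme_def
  proof (intro ballI conjI allI impI)
    fix th sg assume th: "th \<in> set_pmf q" and sg: "sg < k"
    show "0 \<le> phi th sg" using lamP[OF inTT[OF th]] nth_inC[OF th sg] sg unfolding phi_def by auto
  next
    fix th assume th: "th \<in> set_pmf q"
    have "(\<Sum>sg<k. phi th sg) = (\<Sum>sg<k. lam (set (take k th)) (th ! sg))" unfolding phi_def by simp
    also have "\<dots> = (\<Sum>c\<in>set (take k th). lam (set (take k th)) c)" by (rule enum_sum[OF th])
    also have "\<dots> = 1" using lamP[OF inTT[OF th]] by simp
    finally show "(\<Sum>sg<k. phi th sg) = 1" .
  qed
  have inner: "(\<Sum>sg<k. pmf q th * phi th sg * f (th ! id sg)) = pmf q th * (\<Sum>c\<in>C. lam C c * f c)"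
    if th: "th \<in> grp C" for th C f
  proof -
    have th': "th \<in> set_pmf q" "set (take k th) = C" using th by (auto simp: grp_def)
    have "(\<Sum>sg<k. pmf q th * phi th sg * f (th ! id sg)) = pmf q th * (\<Sum>sg<k. lam C (th ! sg) * f (th ! sg))"
      unfolding phi_def using th' by (simp add: sum_distrib_left mult.assoc)
    also have "(\<Sum>sg<k. lam C (th ! sg) * f (th ! sg)) = (\<Sum>c\<in>C. lam C c * f c)"
      using enum_sum[OF th'(1), of "\<lambda>c. lam C c * f c"] th'(2) by simp
    finally show ?thesis .
  qed
  have recP: "rec_points q k rho xi phi id C = P C" if C: "C \<in> TT" for C
  proof -
    have comp: "(\<Sum>th\<in>grp C. \<Sum>sg<k. pmf q th * phi th sg * f (th ! id sg)) / qC q k C = (\<Sum>c\<in>C. lam C c * f c)" for f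
    proof -
      have "(\<Sum>th\<in>grp C. \<Sum>sg<k. pmf q th * phi th sg * f (th ! id sg)) = (\<Sum>th\<in>grp C. pmf q th * (\<Sum>c\<in>C. lam C c * f c))"
        using inner by (intro sum.cong) auto
      also have "\<dots> = qC q k C * (\<Sum>c\<in>C. lam C c * f c)" by (simp add: qC_eq sum_distrib_right)
      finally show ?thesis using qpos[OF C] by simp
    qed
    have "fst (P C) = (\<Sum>c\<in>C. lam C c * rho c)" "snd (P C) = (\<Sum>c\<in>C. lam C c * xi c)"
      using lamP[OF C] by (auto simp: fst_sum snd_sum simp flip: lamP[OF C, THEN conjunct2, THEN conjunct2])
    then show ?thesis unfolding rec_points_def grp_def[symmetric] comp by (simp add: prod_eq_iff)
  qed
  define F where "F i j = joint_val q rho phi i j" for i j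
  have Fdef: "F i j = (\<Sum>th\<in>set_pmf q. pmf q th * (lam (set (take k th)) (th ! i) * rho (th ! j)))" if "i < k" for i j
    unfolding F_def joint_val_def phi_def using that by (simp add: mult.assoc)
  have Fsw: "F i j = F (tr x y i) (tr x y j)" if h: "x < k" "y < k" "i < k" "j < n" for x y i j
  proof -
    have "F i j = (\<Sum>th\<in>set_pmf q. pmf q th * (lam (set (take k (sw x y th))) (sw x y th ! i) * rho (sw x y th ! j)))"
      unfolding Fdef[OF h(3)] using h kn by (intro sum_sw) auto
    also have "\<dots> = (\<Sum>th\<in>set_pmf q. pmf q th * (lam (set (take k th)) (th ! tr x y i) * rho (th ! tr x y j)))"
    proof (intro sum.cong refl)
      fix th assume th: "th \<in> set_pmf q"
      have l: "length th = n" using lenS[OF th] .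
      have "set (take k (sw x y th)) = set (take k th)" by (rule sw_take) (use h l kn in auto)
      moreover have "sw x y th ! i = th ! tr x y i" by (rule sw_nth) (use h l kn in auto)
      moreover have "sw x y th ! j = th ! tr x y j" by (rule sw_nth) (use h l kn in auto)
      ultimately show "pmf q th * (lam (set (take k (sw x y th))) (sw x y th ! i) * rho (sw x y th ! j))
          = pmf q th * (lam (set (take k th)) (th ! tr x y i) * rho (th ! tr x y j))" by simp
    qed
    also have "\<dots> = F (tr x y i) (tr x y j)" using Fdef tr_lt h by simp
    finally show ?thesis .
  qed
  have Fdiag: "F i i = F a a" if "i < k" "a < k" for i a
    using Fsw[of i a i i] that kn by (simp add: tr_def)
  have Fout: "F i j = F a j" if "i < k" "a < k" "k \<le> j" "j < n" for i a j
    using Fsw[of i a i j] that by (simp add: tr_def)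
  have Foff: "F i j = F a b" if h: "i < k" "j < k" "i \<noteq> j" "a < k" "b < k" "a \<noteq> b" for i j a b
  proof -
    define j' where "j' = tr i a j"
    have j': "j' < k" "j' \<noteq> a" using h unfolding j'_def tr_def by auto
    have "F i j = F a j'" using Fsw[of i a i j] h kn unfolding j'_def by (simp add: tr_def)
    also have "\<dots> = F a b" using Fsw[of j' b a j'] h j' kn by (simp add: tr_def)
    finally show ?thesis .
  qed
  have kpos: "real k > 0" using k2 by simp
  have S1: "(\<Sum>a<k. F a j) \<le> rho_E q n rho" if "j < n" for j
    unfolding F_def using jv_sum[OF valid, of rho j] rhoE_ge[OF that] by simp
  define X where "X = (\<Sum>a<k. F a a)"
  have X: "rho_E q n rho \<le> X"
  proof -
    have "X = (\<Sum>C\<in>TT. qC q k C * fst (rec_points q k rho xi phi id C))"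
      unfolding X_def F_def rec_sum by simp
    also have "\<dots> = (\<Sum>C\<in>TT. qC q k C * fst (P C))" using recP by simp
    finally show ?thesis using R by simp
  qed
  have Xk: "X = real k * F i i" if "i < k" for i
  proof -
    have "X = (\<Sum>a<k. F i i)" unfolding X_def using Fdiag[OF that] by (intro sum.cong) auto
    then show ?thesis by simp
  qed
  have ineq: "F i j \<le> F i i" if i: "i < k" and j: "j < n" for i j
  proof (cases "k \<le> j")
    case True
    have "(\<Sum>a<k. F a j) = (\<Sum>a<k. F i j)"
      by (intro sum.cong refl) (metis Fout[OF i _ True j] lessThan_iff)
    then have "real k * F i j = (\<Sum>a<k. F a j)" by simp
    also have "\<dots> \<le> real k * F i i" using S1[OF j] X Xk[OF i] by simp
    finally show ?thesis using kpos by simp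
  next
    case False
    show ?thesis
    proof (cases "j = i")
      case True then show ?thesis by simp
    next
      case ne: False
      have jk: "j < k" using False by simp
      define D where "D = (\<Sum>a<k. \<Sum>b<k. F a b)"
      have "D = (\<Sum>b<k. \<Sum>a<k. F a b)" unfolding D_def by (rule sum.swap)
      also have "\<dots> \<le> (\<Sum>b<k. rho_E q n rho)" using S1 kn by (intro sum_mono) auto
      finally have D1: "D \<le> real k * rho_E q n rho" by simp
      have "D = (\<Sum>a<k. F a a + (\<Sum>b\<in>{..<k} - {a}. F a b))"
        unfolding D_def by (intro sum.cong refl) (simp add: sum.remove)
      also have "\<dots> = X + (\<Sum>a<k. \<Sum>b\<in>{..<k} - {a}. F i j)"
      proof -
        have Fo: "F a b = F i j" if "a < k" "b < k" "a \<noteq> b" for a b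
          using Foff[OF i jk ne[symmetric] that] by simp
        show ?thesis unfolding X_def sum.distrib using Fo by (intro arg_cong2[where f = "(+)"] refl sum.cong) auto
      qed
      also have "\<dots> = X + real k * (real k - 1) * F i j"
        using k2 by (simp add: of_nat_diff)
      finally have D2: "D = X + real k * (real k - 1) * F i j" .
      have "real k * (real k - 1) * F i j \<le> real k * rho_E q n rho - X" using D1 D2 by simp
      also have "\<dots> \<le> (real k - 1) * X" using X kpos by (simp add: algebra_simps)
      also have "\<dots> = real k * (real k - 1) * F i i" using Xk[OF i] by simp
      finally have "real k * (real k - 1) * F i j \<le> real k * (real k - 1) * F i i" .
      moreover have "real k * (real k - 1) > 0" using k2 by simp
      ultimately show ?thesis using mult_le_cancel_left_pos by blast
    qed
  qed
  show ?thesis using valid recP ineq unfolding F_def by blast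
qed

end


context inst begin

lemma main:
  shows "\<exists>(s::ereal) phi recm. s \<le> 0 \<and>
           optimal_scheme q n k rho xi phi \<and>
           persuasive q n k rho phi recm \<and>
           (\<forall>sg<k. recm sg < k) \<and>
           s_Pareto q n k rho xi s (rec_points q k rho xi phi recm) \<and>
           (\<forall>(s'::ereal) P'. s' \<le> 0 \<longrightarrow> s_Pareto q n k rho xi s' P' \<longrightarrow>
              uS_pc q k P' \<le> uS_pc q k (rec_points q k rho xi phi recm))"
proof -
  define psi0 :: "'c list \<Rightarrow> nat \<Rightarrow> real" where "psi0 th sg = (if sg = 0 then 1 else 0)" for th sg
  have "valid_scheme q k psi0"
    unfolding valid_scheme_def psi0_def using k2 by (simp add: sum.delta)
  from stepA[OF this] obtain P0 where P0: "\<forall>C\<in>TT. P0 C \<in> convex hull pts rho xi C"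
    "rho_E q n rho \<le> (\<Sum>C\<in>TT. qC q k C * fst (P0 C))" by blast
  have feas: "\<exists>P. (\<forall>i\<in>TT. P i \<in> convex hull (pts rho xi i)) \<and> (\<Sum>i\<in>TT. qC q k i * fst (P i)) \<ge> rho_E q n rho"
    using P0 by blast
  have finV: "finite (pts rho xi C)" if "C \<in> TT" for C
    using finC[OF that] unfolding pts_def by simp
  obtain s Ps where sP: "s \<le> 0" "\<forall>C\<in>TT. corresponds_to_slope s (pts rho xi C) (Ps C)"
    "(\<Sum>C\<in>TT. qC q k C * fst (Ps C)) \<ge> rho_E q n rho"
    "\<And>P'. (\<forall>C\<in>TT. P' C \<in> convex hull (pts rho xi C)) \<and> (\<Sum>C\<in>TT. qC q k C * fst (P' C)) \<ge> rho_E q n rho \<Longrightarrow>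
               (\<Sum>C\<in>TT. qC q k C * snd (P' C)) \<le> (\<Sum>C\<in>TT. qC q k C * snd (Ps C))"
    using lp_slope[OF finTT finV feas qpos] by blast
  have Pshull: "\<forall>C\<in>TT. Ps C \<in> convex hull pts rho xi C"
    using sP(2) unfolding corresponds_to_slope_def by blast
  obtain phi where phi: "valid_scheme q k phi" "\<forall>C\<in>TT. rec_points q k rho xi phi id C = Ps C"
    "\<And>i j. i < k \<Longrightarrow> j < n \<Longrightarrow> joint_val q rho phi i j \<le> joint_val q rho phi i i"
    using stepC[OF Pshull sP(3)] by blast
  define recm :: "nat \<Rightarrow> nat" where "recm = id"
  have uS_TT: "uS_pc q k P = (\<Sum>C\<in>TT. qC q k C * snd (P C))" for P
    unfolding uS_pc_def TT_def ..
  have uR_TT: "uR_pc q k P = (\<Sum>C\<in>TT. qC q k C * fst (P C))" for P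
    unfolding uR_pc_def TT_def ..
  have recS: "(\<Sum>C\<in>TT. qC q k C * snd (rec_points q k rho xi phi recm C)) = (\<Sum>C\<in>TT. qC q k C * snd (Ps C))"
    using phi(2) unfolding recm_def by simp
  have recR: "(\<Sum>C\<in>TT. qC q k C * fst (rec_points q k rho xi phi recm C)) = (\<Sum>C\<in>TT. qC q k C * fst (Ps C))"
    using phi(2) unfolding recm_def by simp
  have br: "sg \<in> best_resp q n rho phi sg" if "sg < k" for sg
    unfolding best_resp_def using phi(3)[OF that] that kn by auto
  have su: "(\<Sum>C\<in>TT. qC q k C * snd (Ps C)) \<le> sender_util q n k rho xi phi"
  proof -
    have "(\<Sum>C\<in>TT. qC q k C * snd (Ps C)) = (\<Sum>sg<k. joint_val q xi phi sg sg)"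
      using recS rec_sum(2)[of phi recm] unfolding recm_def by simp
    also have "\<dots> \<le> sender_util q n k rho xi phi"
      unfolding sender_util_def
      by (intro sum_mono Max_ge finite_imageI best_resp_fin imageI br) auto
    finally show ?thesis .
  qed
  have opt: "optimal_scheme q n k rho xi phi"
    unfolding optimal_scheme_def
  proof (intro conjI allI impI)
    show "valid_scheme q k phi" by (fact phi(1))
    fix psi assume psi: "valid_scheme q k psi"
    from stepA[OF psi] obtain P' where P': "\<forall>C\<in>TT. P' C \<in> convex hull pts rho xi C"
      "rho_E q n rho \<le> (\<Sum>C\<in>TT. qC q k C * fst (P' C))"
      "sender_util q n k rho xi psi \<le> (\<Sum>C\<in>TT. qC q k C * snd (P' C))" by blast
    have "(\<Sum>C\<in>TT. qC q k C * snd (P' C)) \<le> (\<Sum>C\<in>TT. qC q k C * snd (Ps C))"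
      using sP(4) P'(1,2) by blast
    then show "sender_util q n k rho xi psi \<le> sender_util q n k rho xi phi" using P'(3) su by linarith
  qed
  have pers: "persuasive q n k rho phi recm"
    unfolding persuasive_def recm_def
    using phi(3) kn by (auto intro: divide_right_mono)
  have par: "s_Pareto q n k rho xi s (rec_points q k rho xi phi recm)"
    unfolding s_Pareto_def
  proof (intro conjI allI impI)
    fix C assume "qC q k C > 0"
    then have C: "C \<in> TT" by (simp add: TT_def)
    show "corresponds_to_slope s (pts rho xi C) (rec_points q k rho xi phi recm C)"
      using sP(2) phi(2) C unfolding recm_def by simp
  next
    show "rho_E q n rho \<le> uR_pc q k (rec_points q k rho xi phi recm)"
      unfolding uR_TT recR using sP(3) .
  qed
  have best: "uS_pc q k P' \<le> uS_pc q k (rec_points q k rho xi phi recm)"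
    if "s_Pareto q n k rho xi s' P'" for s' P'
  proof -
    have "\<forall>C\<in>TT. P' C \<in> convex hull pts rho xi C"
      using that unfolding s_Pareto_def corresponds_to_slope_def TT_def by blast
    moreover have "rho_E q n rho \<le> (\<Sum>C\<in>TT. qC q k C * fst (P' C))"
      using that unfolding s_Pareto_def uR_TT by blast
    ultimately have "(\<Sum>C\<in>TT. qC q k C * snd (P' C)) \<le> (\<Sum>C\<in>TT. qC q k C * snd (Ps C))"
      using sP(4) by blast
    then show ?thesis unfolding uS_TT recS .
  qed
  show ?thesis
    using sP(1) opt pers par best unfolding recm_def by (intro exI[of _ s] exI[of _ phi] exI[of _ id]) auto
qed

end

theorem theorem3p1:
  fixes q :: "'c list pmf" and n k :: nat and rho xi :: "'c \<Rightarrow> real"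
  assumes "symmetric_instance q n" and "2 \<le> k" and "k \<le> n"
  shows "\<exists>(s::ereal) phi recm. s \<le> 0 \<and>
           optimal_scheme q n k rho xi phi \<and>
           persuasive q n k rho phi recm \<and>
           (\<forall>sg<k. recm sg < k) \<and>
           s_Pareto q n k rho xi s (rec_points q k rho xi phi recm) \<and>
           (\<forall>(s'::ereal) P'. s' \<le> 0 \<longrightarrow> s_Pareto q n k rho xi s' P' \<longrightarrow>
              uS_pc q k P' \<le> uS_pc q k (rec_points q k rho xi phi recm))"
proof -
  interpret inst q n k rho xi using assms by unfold_locales
  show ?thesis by (rule main)
qed


end
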